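(* Let $K$ be a field, $T$ a subgroup of $K^\times$, and suppose the factor hyperfield $F=K_T$ admits a Krasner valuation $w$. Then there exist a valuation $v$ on $K$ with $vK=wF$ and an initial segment $\rho$ of $vK$ containing $0$ such that $T=1+\mathcal{M}_v^\rho:=\{x\in K: v(x-1)\notin\rho\}$ (so $F=K_\rho:=K_{1+\mathcal{M}_v^\rho}$) and $w=v_\rho$, where $v_\rho(xT):=vx$.
   Context: A hyperfield is $(F,+,\cdot,0,1)$ with $+$ a multivalued operation making $(F,+,0)$ a canonical hypergroup (associative, commutative, unique inverses $-x$ with $0\in x+(-x)$, and $z\in x+y\Rightarrow y\in z+(-x)$; write $x-y:=x+(-y)$ and $A+B:=\bigcup_{a\in A,b\in B}a+b$), $(F,\cdot)$ commutative with $0$ absorbing, $x(y+z)=xy+xz$, and $F\setminus\{0\}$ an abelian group with neutral $1\neq0$. Valuation on a hyperfield $F$: for an ordered abelian group $\Gamma$ and $\infty>\Gamma$ with $\gamma+\infty=\infty+\gamma=\infty$, a surjective map $v:F\to\Gamma\cup\{\infty\}$ with $vx=\infty\iff x=0$, $v(xy)=vx+vy$, $z\in x+y\Rightarrow vz\ge\min\{vx,vy\}$; $vF:=v(F\setminus\{0\})$. Fields are hyperfields with singleton sums. Factor hyperfield: for a field $K$ and a subgroup $T\le K^\times$, $K_T$ is the set of cosets $xT$ with $xT+yT:=\{(x+yt)T:t\in T\}$, $xT\cdot yT=xyT$. An initial segment of an ordered set $\Gamma$ is $\rho\subseteq\Gamma$ with $\delta\in\rho,\gamma<\delta\Rightarrow\gamma\in\rho$.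 For $\gamma\in\Gamma$, $\rho+\gamma:=\{\delta+\gamma:\delta\in\rho\}$, and for $\alpha\in\Gamma\cup\{\infty\}$, "$\alpha>\rho+\gamma$" means $\alpha\notin\rho+\gamma$. Krasner valuation: a valuation $v$ on a hyperfield $F$ such that (KVH1) for all $x,y\in F$ with $0\notin x+y$, the set $v(x+y)$ is a singleton; (KVH2) there is an initial segment $\rho_v$ of $vF$ with $0\in\rho_v$ (the norm) such that for all $x,y,z,t\in F$ with $z\in x+y$: $t\in x+y$ iff $vs>\rho_v+\min\{vx,vy\}$ for all $s\in z-t$. *)

theory Defs
  imports Main
begin

record 'b hyperfield =
  hf_carrier :: "'b set"
  hf_add :: "'b \<Rightarrow> 'b \<Rightarrow> 'b set"
  hf_mult :: "'b \<Rightarrow> 'b \<Rightarrow> 'b"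
  hf_zero :: 'b
  hf_one :: 'b
  hf_neg :: "'b \<Rightarrow> 'b"

definition hf_minus :: "('b, 'm) hyperfield_scheme \<Rightarrow> 'b \<Rightarrow> 'b \<Rightarrow> 'b set" where
  "hf_minus F x y = hf_add F x (hf_neg F y)"

text \<open>Gamma \<union> {\<infinity>} is rendered as 'g option, None = \<infinity>.\<close>
definition oadd :: "'g::linordered_ab_group_add option \<Rightarrow> 'g option \<Rightarrow> 'g option" where
  "oadd a b = (case a of None \<Rightarrow> None | Some x \<Rightarrow> (case b of None \<Rightarrow> None | Some y \<Rightarrow> Some (x + y)))"

definition ole :: "'g::linordered_ab_group_add option \<Rightarrow> 'g option \<Rightarrow> bool" where
  "ole a b = (case b of None \<Rightarrow> True | Some y \<Rightarrow> (case a of None \<Rightarrow> False | Some x \<Rightarrow> x \<le> y))"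

definition omin :: "'g::linordered_ab_group_add option \<Rightarrow> 'g option \<Rightarrow> 'g option" where
  "omin a b = (if ole a b then a else b)"

definition hf_valuation ::
  "('b, 'm) hyperfield_scheme \<Rightarrow> ('b \<Rightarrow> 'g::linordered_ab_group_add option) \<Rightarrow> bool" where
  "hf_valuation F v \<longleftrightarrow>
     v ` hf_carrier F = UNIV \<and>
     (\<forall>x\<in>hf_carrier F. v x = None \<longleftrightarrow> x = hf_zero F) \<and>
     (\<forall>x\<in>hf_carrier F. \<forall>y\<in>hf_carrier F. v (hf_mult F x y) = oadd (v x) (v y)) \<and>
     (\<forall>x\<in>hf_carrier F. \<forall>y\<in>hf_carrier F. \<forall>z\<in>hf_add F x y. ole (omin (v x) (v y)) (v z))"

definition value_group ::
  "('b, 'm) hyperfield_scheme \<Rightarrow> ('b \<Rightarrow> 'g::linordered_ab_group_add option) \<Rightarrow> 'g set" where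
  "value_group F v = {g. \<exists>x\<in>hf_carrier F - {hf_zero F}. v x = Some g}"

definition initial_segment :: "'g::linorder set \<Rightarrow> 'g set \<Rightarrow> bool" where
  "initial_segment S \<rho> \<longleftrightarrow> \<rho> \<subseteq> S \<and> (\<forall>\<delta>\<in>\<rho>. \<forall>\<gamma>\<in>S. \<gamma> < \<delta> \<longrightarrow> \<gamma> \<in> \<rho>)"

text \<open>"alpha > rho + gamma", i.e. alpha \<notin> rho + gamma.  For gamma = \<infinity> we read rho + \<infinity> as
  the whole of Gamma (the cut just below \<infinity>), so the condition means alpha = \<infinity>.\<close>
definition above_seg :: "'g::linordered_ab_group_add set \<Rightarrow> 'g option \<Rightarrow> 'g option \<Rightarrow> bool" where
  "above_seg \<rho> \<gamma> \<alpha> = (case \<gamma> of None \<Rightarrow> \<alpha> = None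
                           | Some g \<Rightarrow> \<alpha> \<notin> Some ` ((\<lambda>d. d + g) ` \<rho>))"

definition krasner_valuation ::
  "('b, 'm) hyperfield_scheme \<Rightarrow> ('b \<Rightarrow> 'g::linordered_ab_group_add option) \<Rightarrow> bool" where
  "krasner_valuation F v \<longleftrightarrow>
     hf_valuation F v \<and>
     (\<forall>x\<in>hf_carrier F. \<forall>y\<in>hf_carrier F. hf_zero F \<notin> hf_add F x y \<longrightarrow>
         (\<exists>a. v ` hf_add F x y = {a})) \<and>
     (\<exists>\<rho>. initial_segment (value_group F v) \<rho> \<and> 0 \<in> \<rho> \<and>
        (\<forall>x\<in>hf_carrier F. \<forall>y\<in>hf_carrier F. \<forall>z\<in>hf_carrier F. \<forall>t\<in>hf_carrier F.
           z \<in> hf_add F x y \<longrightarrow>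
           (t \<in> hf_add F x y \<longleftrightarrow>
              (\<forall>s\<in>hf_minus F z t. above_seg \<rho> (omin (v x) (v y)) (v s)))))"

definition field_hf :: "'a::field hyperfield" where
  "field_hf = \<lparr>hf_carrier = UNIV, hf_add = (\<lambda>x y. {x + y}), hf_mult = (*),
               hf_zero = 0, hf_one = 1, hf_neg = uminus\<rparr>"

definition units_subgroup :: "'a::field set \<Rightarrow> bool" where
  "units_subgroup T \<longleftrightarrow> T \<subseteq> - {0} \<and> 1 \<in> T \<and> (\<forall>a\<in>T. \<forall>b\<in>T. a * b \<in> T) \<and>
     (\<forall>a\<in>T. inverse a \<in> T)"

definition coset :: "'a::field set \<Rightarrow> 'a \<Rightarrow> 'a set" where
  "coset T x = (\<lambda>t. x * t) ` T"

text \<open>Factor hyperfield K_T.  xT + yT = {(x + y t)T : t \<in> T}, written representative-free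
  as {(a + b)T : a \<in> xT, b \<in> yT} (same set); xT * yT = xyT, written as the set product.\<close>
definition factor_hf :: "'a::field set \<Rightarrow> 'a set hyperfield" where
  "factor_hf T = \<lparr>hf_carrier = range (coset T),
     hf_add = (\<lambda>A B. {coset T (a + b) | a b. a \<in> A \<and> b \<in> B}),
     hf_mult = (\<lambda>A B. {a * b | a b. a \<in> A \<and> b \<in> B}),
     hf_zero = coset T 0, hf_one = coset T 1, hf_neg = (\<lambda>A. uminus ` A)\<rparr>"

end

theory Submission
  imports Defs
begin

lemma us_facts:
  assumes "units_subgroup T"
  shows "1 \<in> T" "0 \<notin> T" "\<And>a b. a \<in> T \<Longrightarrow> b \<in> T \<Longrightarrow> a * b \<in> T"
        "\<And>a. a \<in> T \<Longrightarrow> inverse a \<in> T"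
  using assms unfolding units_subgroup_def by auto

lemma coset_0: assumes "units_subgroup T" shows "coset T 0 = {0}"
  using us_facts[OF assms] unfolding coset_def by auto

lemma coset_1: assumes "units_subgroup T" shows "coset T 1 = T"
  unfolding coset_def by simp

lemma coset_eq_0: assumes "units_subgroup T" shows "coset T x = coset T 0 \<longleftrightarrow> x = 0"
proof
  assume h: "coset T x = coset T 0"
  have "x * 1 \<in> coset T x" using us_facts[OF assms] unfolding coset_def by blast
  then show "x = 0" using h coset_0[OF assms] by simp
qed simp

lemma coset_eq_T: assumes "units_subgroup T" shows "coset T c = T \<longleftrightarrow> c \<in> T"
proof
  assume h: "coset T c = T"
  have "c * 1 \<in> coset T c" using us_facts[OF assms] unfolding coset_def by blast
  then show "c \<in> T" using h by simp
next
  assume c: "c \<in> T"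
  have c0: "c \<noteq> 0" using c us_facts[OF assms] by auto
  show "coset T c = T"
  proof
    show "coset T c \<subseteq> T" using c us_facts[OF assms] unfolding coset_def by auto
    show "T \<subseteq> coset T c"
    proof
      fix t assume t: "t \<in> T"
      have "inverse c * t \<in> T" using us_facts[OF assms] c t by blast
      moreover have "t = c * (inverse c * t)" using c0 by (simp add: field_simps)
      ultimately show "t \<in> coset T c" unfolding coset_def by blast
    qed
  qed
qed

lemma coset_mult: assumes "units_subgroup T"
  shows "{a * b | a b. a \<in> coset T x \<and> b \<in> coset T y} = coset T (x * y)"
proof
  show "{a * b | a b. a \<in> coset T x \<and> b \<in> coset T y} \<subseteq> coset T (x * y)"
  proof
    fix z assume "z \<in> {a * b | a b. a \<in> coset T x \<and> b \<in> coset T y}"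
    then obtain t1 t2 where "t1 \<in> T" "t2 \<in> T" "z = (x * t1) * (y * t2)" unfolding coset_def by blast
    moreover then have "z = (x*y) * (t1 * t2)" by (simp add: ac_simps)
    ultimately show "z \<in> coset T (x*y)" using us_facts[OF assms] unfolding coset_def by blast
  qed
  show "coset T (x * y) \<subseteq> {a * b | a b. a \<in> coset T x \<and> b \<in> coset T y}"
  proof
    fix z assume "z \<in> coset T (x*y)"
    then obtain t where t: "t \<in> T" "z = x * y * t" unfolding coset_def by blast
    have "x * t \<in> coset T x" "y * 1 \<in> coset T y" using t us_facts[OF assms] unfolding coset_def by blast+
    moreover have "z = (x * t) * (y * 1)" using t by (simp add: ac_simps)
    ultimately show "z \<in> {a * b | a b. a \<in> coset T x \<and> b \<in> coset T y}" by blast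
  qed
qed

lemma coset_neg: "uminus ` coset T c = coset T (- c)"
  unfolding coset_def by (auto simp: image_image)

lemma double_zero: fixes g :: "'g::linordered_ab_group_add" shows "g + g = 0 \<Longrightarrow> g = 0"
proof (rule ccontr)
  assume h: "g + g = 0" "g \<noteq> 0"
  then have "g < 0 \<or> g > 0" by auto
  then show False using h add_neg_neg[of g g] add_pos_pos[of g g] by auto
qed

lemma oadd_Some0: "oadd (Some 0) p = p"
  unfolding oadd_def by (cases p) auto

lemma not_below:
  fixes \<rho> :: "'g::linordered_ab_group_add set"
  assumes down: "\<And>a b. a \<in> \<rho> \<Longrightarrow> b \<le> a \<Longrightarrow> b \<in> \<rho>"
    and "ole (omin p q) r" "p \<notin> Some ` \<rho>" "q \<notin> Some ` \<rho>"
  shows "r \<notin> Some ` \<rho>"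
proof
  assume "r \<in> Some ` \<rho>"
  then obtain a where a: "r = Some a" "a \<in> \<rho>" by blast
  have m: "omin p q \<notin> Some ` \<rho>" using assms(3,4) unfolding omin_def by auto
  obtain b where b: "omin p q = Some b" "b \<le> a" using assms(2) a unfolding ole_def
    by (cases "omin p q") auto
  then show False using m down[OF a(2) b(2)] by auto
qed

theorem mainTheorem8:
  fixes T :: "'a::field set"
    and w :: "'a set \<Rightarrow> 'g::linordered_ab_group_add option"
  assumes "units_subgroup T"
    and "krasner_valuation (factor_hf T) w"
  shows "\<exists>(v :: 'a \<Rightarrow> 'g option) \<rho>.
           hf_valuation field_hf v \<and>
           value_group field_hf v = value_group (factor_hf T) w \<and>
           initial_segment (value_group field_hf v) \<rho> \<and> 0 \<in> \<rho> \<and>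
           T = {x. v (x - 1) \<notin> Some ` \<rho>} \<and>
           (\<forall>x. w (coset T x) = v x)"
proof -
  note us = assms(1)
  define F where "F = factor_hf T"
  define v where "v = (\<lambda>x. w (coset T x))"
  have Fc: "hf_carrier F = range (coset T)" and Fz: "hf_zero F = coset T 0"
    and Fa: "\<And>A B. hf_add F A B = {coset T (a + b) | a b. a \<in> A \<and> b \<in> B}"
    and Fm: "\<And>A B. hf_mult F A B = {a * b | a b. a \<in> A \<and> b \<in> B}"
    and Fn: "\<And>A. hf_neg F A = uminus ` A"
    unfolding F_def factor_hf_def by simp_all
  have hv: "hf_valuation F w" using assms(2) unfolding F_def krasner_valuation_def by blast
  have surj: "w ` range (coset T) = UNIV" using hv Fc unfolding hf_valuation_def by simp
  have vnone: "\<And>x. v x = None \<longleftrightarrow> x = 0"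
    using hv Fc Fz coset_eq_0[OF us] unfolding hf_valuation_def v_def by auto
  have vmult: "\<And>x y. v (x * y) = oadd (v x) (v y)"
  proof -
    fix x y
    have "w (hf_mult F (coset T x) (coset T y)) = oadd (v x) (v y)"
      using hv Fc unfolding hf_valuation_def v_def by auto
    then show "v (x * y) = oadd (v x) (v y)" using Fm coset_mult[OF us] v_def by simp
  qed
  have vadd: "\<And>x y. ole (omin (v x) (v y)) (v (x + y))"
  proof -
    fix x y
    have "x*1 \<in> coset T x" "y*1 \<in> coset T y" unfolding coset_def using us_facts[OF us] by blast+
    then have "coset T (x*1 + y*1) \<in> hf_add F (coset T x) (coset T y)"
      unfolding Fa by blast
    then have z: "coset T (x + y) \<in> hf_add F (coset T x) (coset T y)" by simp
    have h4: "\<forall>X\<in>hf_carrier F. \<forall>Y\<in>hf_carrier F. \<forall>Z\<in>hf_add F X Y. ole (omin (w X) (w Y)) (w Z)"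
      using hv unfolding hf_valuation_def by blast
    show "ole (omin (v x) (v y)) (v (x + y))"
      using h4 z Fc unfolding v_def by blast
  qed
  have vsurj: "v ` UNIV = UNIV" using surj unfolding v_def by (simp add: image_comp)
  have vval: "hf_valuation field_hf v"
    unfolding hf_valuation_def field_hf_def using vsurj vnone vmult vadd by simp
  have vgF: "value_group F w = UNIV"
  proof -
    { fix g
      obtain X where X: "X \<in> range (coset T)" "w X = Some g" using surj by (metis UNIV_I imageE)
      have w0': "w (coset T 0) = None" using vnone unfolding v_def by simp
      have "X \<noteq> coset T 0" using X w0' by auto
      then have "g \<in> value_group F w" unfolding value_group_def using X Fc Fz by auto }
    then show ?thesis by auto
  qed
  have vgK: "value_group field_hf v = UNIV"
  proof -
    { fix g
      obtain x where x: "v x = Some g" using vsurj by (metis UNIV_I imageE)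
      have "x \<noteq> 0" using x vnone[of x] by auto
      then have "g \<in> value_group field_hf v" unfolding value_group_def field_hf_def using x by auto }
    then show ?thesis by auto
  qed
  obtain \<rho> where seg: "initial_segment (value_group F w) \<rho>" and r0: "0 \<in> \<rho>"
    and kv: "\<forall>x\<in>hf_carrier F. \<forall>y\<in>hf_carrier F. \<forall>z\<in>hf_carrier F. \<forall>t\<in>hf_carrier F.
           z \<in> hf_add F x y \<longrightarrow>
           (t \<in> hf_add F x y \<longleftrightarrow>
              (\<forall>s\<in>hf_minus F z t. above_seg \<rho> (omin (w x) (w y)) (w s)))"
    using assms(2) unfolding F_def[symmetric] krasner_valuation_def by blast
  have down: "\<And>a b. a \<in> \<rho> \<Longrightarrow> b \<le> a \<Longrightarrow> b \<in> \<rho>"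
    using seg vgF unfolding initial_segment_def by (metis UNIV_I order_le_less)
  have v1: "v 1 = Some 0"
  proof -
    obtain g where g: "v 1 = Some g" using vnone by (cases "v 1") auto
    have "v (1 * 1) = oadd (v 1) (v 1)" by (rule vmult)
    then have "g = g + g" using g unfolding oadd_def by simp
    then show ?thesis using g by simp
  qed
  have vm1: "v (-1) = Some 0"
  proof -
    obtain g where g: "v (-1) = Some g" using vnone by (cases "v (-1)") auto
    have "v ((-1) * (-1)) = oadd (v (-1)) (v (-1))" by (rule vmult)
    then have "g + g = 0" using g v1 unfolding oadd_def by simp
    then show ?thesis using g double_zero by blast
  qed
  have vT: "\<And>u. u \<in> T \<Longrightarrow> v u = Some 0"
    using v1 coset_eq_T[OF us] coset_1[OF us] unfolding v_def by metis
  have vneg: "\<And>x. v (- x) = v x"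
  proof -
    fix x
    have "v ((-1) * x) = oadd (v (-1)) (v x)" by (rule vmult)
    then show "v (- x) = v x" using vm1 oadd_Some0 by simp
  qed
  have wT: "w T = Some 0" using v1 coset_1[OF us] unfolding v_def by simp
  have w0: "w (coset T 0) = None" using vnone unfolding v_def by simp
  have omin0: "omin (w T) (w (coset T 0)) = Some 0"
    using wT w0 unfolding omin_def ole_def by simp
  have Tc: "T \<in> hf_carrier F" using Fc coset_1[OF us] by (metis rangeI)
  have addT0: "hf_add F T (coset T 0) = {T}"
  proof -
    have "hf_add F T (coset T 0) = {coset T a | a. a \<in> T}"
      unfolding Fa coset_0[OF us] by simp
    also have "\<dots> = {T}" using coset_eq_T[OF us] us_facts[OF us] by auto
    finally show ?thesis .
  qed
  have KV: "\<And>c. c \<in> T \<longleftrightarrow> (\<forall>s\<in>hf_minus F T (coset T c). w s \<notin> Some ` \<rho>)"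
  proof -
    fix c
    have "coset T c \<in> hf_add F T (coset T 0) \<longleftrightarrow>
          (\<forall>s\<in>hf_minus F T (coset T c). above_seg \<rho> (omin (w T) (w (coset T 0))) (w s))"
      using kv Tc Fc addT0 by (metis rangeI singletonI)
    then show "c \<in> T \<longleftrightarrow> (\<forall>s\<in>hf_minus F T (coset T c). w s \<notin> Some ` \<rho>)"
      using addT0 coset_eq_T[OF us] omin0 unfolding above_seg_def by simp
  qed
  have minus: "\<And>c. hf_minus F T (coset T c) = {coset T (a + b) | a b. a \<in> T \<and> b \<in> coset T (- c)}"
    unfolding hf_minus_def Fa Fn coset_neg by simp
  have dir1: "\<And>c. c \<in> T \<Longrightarrow> v (c - 1) \<notin> Some ` \<rho>"
  proof -
    fix c assume c: "c \<in> T"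
    have b: "(- c) * 1 \<in> coset T (- c)" unfolding coset_def using us_facts(1)[OF us] by (rule imageI)
    have "coset T (1 + (- c) * 1) \<in> {coset T (a + b) | a b. a \<in> T \<and> b \<in> coset T (- c)}"
      using b us_facts(1)[OF us] by blast
    then have "coset T (1 + (- c) * 1) \<in> hf_minus F T (coset T c)"
      unfolding minus .
    then have "v (1 - c) \<notin> Some ` \<rho>" using KV c unfolding v_def by simp
    moreover have "v (c - 1) = v (1 - c)" using vneg[of "1 - c"] by simp
    ultimately show "v (c - 1) \<notin> Some ` \<rho>" by simp
  qed
  have dir2: "\<And>c. v (c - 1) \<notin> Some ` \<rho> \<Longrightarrow> c \<in> T"
  proof -
    fix c assume c: "v (c - 1) \<notin> Some ` \<rho>"
    show "c \<in> T" unfolding KV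
    proof
      fix s assume "s \<in> hf_minus F T (coset T c)"
      then obtain a b where ab: "a \<in> T" "b \<in> coset T (- c)" "s = coset T (a + b)"
        unfolding minus by blast
      then obtain t where "t \<in> T" "b = (- c) * t" unfolding coset_def by blast
      then have at: "a \<in> T" "t \<in> T" "s = coset T (a + (- c) * t)" using ab by auto
      have t0: "t \<noteq> 0" using at us_facts[OF us] by auto
      have "a * inverse t \<in> T" using at us_facts[OF us] by blast
      then have p1: "v (a * inverse t - 1) \<notin> Some ` \<rho>" by (rule dir1)
      have e1: "a - t = t * (a * inverse t - 1)" using t0 by (simp add: field_simps)
      have q1: "v (a - t) \<notin> Some ` \<rho>" using p1 vmult[of t] vT[OF at(2)] oadd_Some0 e1 by metis
      have q2: "v (t * (1 - c)) \<notin> Some ` \<rho>"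
        using c vmult[of t "1 - c"] vT[OF at(2)] vneg[of "1 - c"] by (simp add: oadd_Some0)
      have e2: "a + (- c) * t = (a - t) + t * (1 - c)" by (simp add: algebra_simps)
      have nb: "v ((a - t) + t * (1 - c)) \<notin> Some ` \<rho>"
        by (rule not_below[where p="v (a - t)" and q="v (t * (1 - c))"])
           (rule down, assumption+, rule vadd, rule q1, rule q2)
      have "v (a + (- c) * t) \<notin> Some ` \<rho>"
        by (subst e2) (rule nb)
      then show "w s \<notin> Some ` \<rho>" using at unfolding v_def by simp
    qed
  qed
  have Teq: "T = {x. v (x - 1) \<notin> Some ` \<rho>}" using dir1 dir2 by blast
  have seg2: "initial_segment (value_group field_hf v) \<rho>"
    using seg vgF vgK by simp
  have eqvg: "value_group field_hf v = value_group (factor_hf T) w"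
    using vgF vgK unfolding F_def by simp
  have wv: "\<forall>x. w (coset T x) = v x" by (simp add: v_def)
  show ?thesis
    using vval eqvg seg2 r0 Teq wv by blast
qed

end
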